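(* Let $\phi:[0,1]\to\mathbb{C}$ be continuous with $\phi(0)=\phi(1)=1$ and $\hat\phi\in\ell^1(\mathbb{Z})$. Let $m,\mathfrak{m}\in\mathbb{N}$, $N\ge\mathfrak{m}$, $\mu(k)=\sum_{l\in k-B_N}\hat\phi(l)$, $\nu(k)=\sum_{l\notin k-B_N}\hat\phi(l)$, and for $\mathfrak{m}$-Fourier bandlimited $f\in L^2([0,1];\mathbb{C}^m)$ let $\mathcal{R}_\phi f(x)=\sum_{j=0}^{2N-1}f(j/2N)s_N(x-j/2N)\phi(x-j/2N)$ (arguments modulo $1$). Then $$\overline{\varepsilon}_1\|f\|_{L^2([0,1];\mathbb{C}^m)}\le\|f-\mathcal{R}_\phi f\|_{L^2([0,1];\mathbb{C}^m)}\le\overline{\varepsilon}_2\|f\|_{L^2([0,1];\mathbb{C}^m)},$$ where $$\overline{\varepsilon}_1=\min_{k\in B_{\mathfrak{m}}}\Big\{|\nu(k)|^2+\sum_{l\in\mathbb{Z}\setminus\{0\}}|\mu(k+2lN)|^2\Big\}^{1/2},\quad \overline{\varepsilon}_2=\max_{k\in B_{\mathfrak{m}}}\Big\{|\nu(k)|^2+\sum_{l\in\mathbb{Z}\setminus\{0\}}|\mu(k+2lN)|^2\Big\}^{1/2}.$$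
   Context: $B_N=\{-N,\dots,N-1\}$, $k-B_N=\{k-b:b\in B_N\}$. $\hat g(k)=\int_0^1 g(x)e^{-i2\pi kx}dx$. $f$ is $\mathfrak{m}$-Fourier bandlimited if $\hat f(k)=0$ for $k\notin B_{\mathfrak{m}}$ (identified with its continuous $1$-periodic representative). $s_N(x)=\frac1{2N}\sum_{k=-N}^{N-1}e^{i2\pi kx}$. *)

theory Defs
  imports "HOL-Analysis.Analysis"
begin

definition BN :: "nat \<Rightarrow> int set" where
  "BN N = {- int N .. int N - 1}"

definition fcoef :: "(real \<Rightarrow> complex) \<Rightarrow> int \<Rightarrow> complex" where
  "fcoef g k = integral {0..1} (\<lambda>x. g x * exp (- (\<i> * 2 * complex_of_real pi * of_int k * complex_of_real x)))"

definition vfcoef :: "(real \<Rightarrow> complex ^ 'm) \<Rightarrow> int \<Rightarrow> complex ^ 'm" where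
  "vfcoef f k = (\<chi> i. fcoef (\<lambda>x. f x $ i) k)"

text \<open>f is mm-Fourier bandlimited, identified with its continuous 1-periodic representative.\<close>
definition bandlimited :: "nat \<Rightarrow> (real \<Rightarrow> complex ^ 'm) \<Rightarrow> bool" where
  "bandlimited mm f \<longleftrightarrow> continuous_on UNIV f \<and> (\<forall>x. f (x + 1) = f x)
      \<and> (\<forall>k. k \<notin> BN mm \<longrightarrow> vfcoef f k = 0)"

definition L2norm :: "(real \<Rightarrow> complex ^ 'm) \<Rightarrow> real" where
  "L2norm f = sqrt (integral {0..1} (\<lambda>x. (norm (f x))\<^sup>2))"

definition sN :: "nat \<Rightarrow> real \<Rightarrow> complex" where
  "sN N x = (1 / (2 * of_nat N)) *
     (\<Sum>k\<in>BN N. exp (\<i> * 2 * complex_of_real pi * of_int k * complex_of_real x))"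

definition cscale :: "complex \<Rightarrow> complex ^ 'm \<Rightarrow> complex ^ 'm" where
  "cscale c v = (\<chi> i. c * v $ i)"

definition Rphi :: "nat \<Rightarrow> (real \<Rightarrow> complex) \<Rightarrow> (real \<Rightarrow> complex ^ 'm) \<Rightarrow> real \<Rightarrow> complex ^ 'm" where
  "Rphi N \<phi> f x = (\<Sum>j<2 * N.
      cscale (sN N (x - real j / (2 * real N)) * \<phi> (frac (x - real j / (2 * real N))))
             (f (real j / (2 * real N))))"

definition mu :: "nat \<Rightarrow> (real \<Rightarrow> complex) \<Rightarrow> int \<Rightarrow> complex" where
  "mu N \<phi> k = (\<Sum>l\<in>(\<lambda>b. k - b) ` BN N. fcoef \<phi> l)"

definition nu :: "nat \<Rightarrow> (real \<Rightarrow> complex) \<Rightarrow> int \<Rightarrow> complex" where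
  "nu N \<phi> k = infsum (fcoef \<phi>) (UNIV - (\<lambda>b. k - b) ` BN N)"

definition errterm :: "nat \<Rightarrow> (real \<Rightarrow> complex) \<Rightarrow> int \<Rightarrow> real" where
  "errterm N \<phi> k = sqrt ((cmod (nu N \<phi> k))\<^sup>2
      + infsum (\<lambda>l. (cmod (mu N \<phi> (k + 2 * l * int N)))\<^sup>2) (UNIV - {0}))"

definition eps1 :: "nat \<Rightarrow> nat \<Rightarrow> (real \<Rightarrow> complex) \<Rightarrow> real" where
  "eps1 mm N \<phi> = Min (errterm N \<phi> ` BN mm)"

definition eps2 :: "nat \<Rightarrow> nat \<Rightarrow> (real \<Rightarrow> complex) \<Rightarrow> real" where
  "eps2 mm N \<phi> = Max (errterm N \<phi> ` BN mm)"

end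

theory Submission
  imports Defs
begin
definition ee :: "int \<Rightarrow> real \<Rightarrow> complex" where
  "ee k x = exp (\<i> * 2 * complex_of_real pi * of_int k * complex_of_real x)"

lemma ee_add: "ee (k + j) x = ee k x * ee j x"
  unfolding ee_def by (simp add: exp_add[symmetric] algebra_simps)

lemma ee_zero[simp]: "ee 0 x = 1" by (simp add: ee_def)

lemma norm_ee[simp]: "norm (ee k x) = 1"
  unfolding ee_def by (simp add: norm_exp_eq_Re)

lemma cnj_ee: "cnj (ee k x) = ee (-k) x"
  unfolding ee_def by (simp add: exp_cnj)

lemma ee_mult_cnj: "ee k x * cnj (ee k x) = 1"
  by (metis complex_norm_square mult.commute norm_ee of_real_1 power_one)

lemma ee_int_shift: "ee k (x + of_int n) = ee k x"
proof -
  have "ee k (x + of_int n) = exp (\<i> * 2 * complex_of_real pi * of_int k * complex_of_real x + \<i> * (of_int (k*n) * (of_real pi * 2)))"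
    unfolding ee_def by (simp add: algebra_simps)
  also have "\<dots> = ee k x" unfolding ee_def by (rule exp_plus_2pin)
  finally show ?thesis .
qed

lemma ee_one_shift: "ee k (x + 1) = ee k x"
  using ee_int_shift[of k x 1] by simp

lemma ee_at0[simp]: "ee k 0 = 1" by (simp add: ee_def)
lemma ee_at1[simp]: "ee k 1 = 1" using ee_one_shift[of k 0] by simp

lemma ee_scale: "ee k (of_int j * x) = ee (k * j) x"
  unfolding ee_def by (simp add: algebra_simps)

lemma continuous_ee[continuous_intros]: "continuous_on S (ee k)"
  unfolding ee_def by (intro continuous_intros)

lemma deriv_ee: "((\<lambda>x. ee k x / (\<i> * 2 * complex_of_real pi * of_int k)) has_vector_derivative ee k x) (at x within S)"
  if "k \<noteq> 0"
proof -
  have "((\<lambda>x. ee k x) has_vector_derivative (\<i> * 2 * complex_of_real pi * of_int k) * ee k x) (at x within S)"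
    unfolding ee_def
    by (rule has_vector_derivative_real_field) (auto intro!: derivative_eq_intros simp: algebra_simps)
  then show ?thesis using that
    by (auto intro!: derivative_eq_intros simp: field_simps)
qed

lemma integral_ee: "(ee k has_integral (if k = 0 then 1 else 0)) {0..1}"
proof (cases "k = 0")
  case True
  have "ee 0 = (\<lambda>x. 1)" by (rule ext) simp
  then show ?thesis using True has_integral_const_real[of "1::complex" 0 1] by simp
next
  case False
  have "(ee k has_integral ((\<lambda>x. ee k x / (\<i> * 2 * complex_of_real pi * of_int k)) 1 - (\<lambda>x. ee k x / (\<i> * 2 * complex_of_real pi * of_int k)) 0)) {0..1}"
    by (rule fundamental_theorem_of_calculus) (auto intro: deriv_ee[OF False])
  then show ?thesis using False by simp
qed

lemma int01: fixes g :: "real \<Rightarrow> 'a::banach" shows "continuous_on {0..1} g \<Longrightarrow> g integrable_on {0..1::real}"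
  by (rule integrable_continuous_interval)

lemma integral_of_real_c: "f integrable_on S \<Longrightarrow> integral S (\<lambda>x. complex_of_real (f x)) = of_real (integral S f)"
  by (rule integral_unique) (rule has_integral_of_real, simp add: integrable_integral)

lemma fcoef_alt: "fcoef g k = integral {0..1} (\<lambda>x. g x * cnj (ee k x))"
  unfolding fcoef_def ee_def by (simp add: exp_cnj)

lemma ee_cnj_prod: "ee j x * cnj (ee k x) = ee (j - k) x"
  by (simp add: cnj_ee ee_add[symmetric])

lemma orth: "integral {0..1} (\<lambda>x. ee j x * cnj (ee k x)) = (if j = k then 1 else 0)"
  using integral_ee[of "j - k"] by (simp add: ee_cnj_prod integral_unique)

lemma fcoef_trig:
  assumes "finite K"
  shows "fcoef (\<lambda>x. \<Sum>j\<in>K. a j * ee j x) k = (if k \<in> K then a k else 0)"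
proof -
  have "fcoef (\<lambda>x. \<Sum>j\<in>K. a j * ee j x) k = integral {0..1} (\<lambda>x. \<Sum>j\<in>K. a j * (ee j x * cnj (ee k x)))"
    unfolding fcoef_alt by (simp add: sum_distrib_right mult.assoc)
  also have "\<dots> = (\<Sum>j\<in>K. a j * integral {0..1} (\<lambda>x. ee j x * cnj (ee k x)))"
    by (subst integral_sum) (auto intro!: int01 continuous_intros assms)
  also have "\<dots> = (\<Sum>j\<in>K. if j = k then a k else 0)"
    by (rule sum.cong) (auto simp: orth)
  also have "\<dots> = (if k \<in> K then a k else 0)"
    using assms by (simp add: sum.delta')
  finally show ?thesis .
qed

lemma integral_times_cnj_trig:
  assumes "continuous_on {0..1} g" "finite K"
  shows "integral {0..1} (\<lambda>x. g x * cnj (\<Sum>j\<in>K. a j * ee j x)) = (\<Sum>j\<in>K. cnj (a j) * fcoef g j)"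
proof -
  have "integral {0..1} (\<lambda>x. g x * cnj (\<Sum>j\<in>K. a j * ee j x))
      = integral {0..1} (\<lambda>x. \<Sum>j\<in>K. cnj (a j) * (g x * cnj (ee j x)))"
    by (simp add: sum_distrib_left mult_ac)
  also have "\<dots> = (\<Sum>j\<in>K. cnj (a j) * fcoef g j)"
    unfolding fcoef_alt
    by (subst integral_sum) (auto intro!: int01 continuous_intros assms)
  finally show ?thesis .
qed

lemma cont_trig[continuous_intros]: "continuous_on S (\<lambda>x. \<Sum>j\<in>K. a j * ee j x)"
  by (intro continuous_intros)

lemma best_approx:
  assumes h: "continuous_on {0..1} h" and K: "finite K"
  shows "integral {0..1} (\<lambda>x. (cmod (h x - (\<Sum>j\<in>K. a j * ee j x)))\<^sup>2)
     = integral {0..1} (\<lambda>x. (cmod (h x))\<^sup>2) - (\<Sum>j\<in>K. (cmod (fcoef h j))\<^sup>2)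
       + (\<Sum>j\<in>K. (cmod (a j - fcoef h j))\<^sup>2)"
proof -
  define q where "q x = (\<Sum>j\<in>K. a j * ee j x)" for x
  have cq: "continuous_on {0..1} q" unfolding q_def by (intro continuous_intros)
  define I2 where "I2 = (\<Sum>j\<in>K. cnj (a j) * fcoef h j)"
  have i2: "integral {0..1} (\<lambda>x. h x * cnj (q x)) = I2"
    unfolding q_def I2_def by (rule integral_times_cnj_trig[OF h K])
  have i3: "integral {0..1} (\<lambda>x. q x * cnj (h x)) = cnj I2"
    by (subst i2[symmetric], subst integral_cnj) (simp add: mult.commute)
  have i4: "integral {0..1} (\<lambda>x. q x * cnj (q x)) = (\<Sum>j\<in>K. cnj (a j) * a j)"
    unfolding q_def[abs_def] by (subst integral_times_cnj_trig[OF cont_trig K]) (simp add: fcoef_trig K)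
  have "complex_of_real (integral {0..1} (\<lambda>x. (cmod (h x - q x))\<^sup>2))
      = integral {0..1} (\<lambda>x. complex_of_real ((cmod (h x - q x))\<^sup>2))"
    by (rule integral_of_real_c[symmetric]) (auto intro!: int01 continuous_intros h cq)
  also have "\<dots> = integral {0..1} (\<lambda>x. (h x - q x) * cnj (h x - q x))"
    by (simp only: complex_norm_square)
  also have "\<dots> = integral {0..1} (\<lambda>x. h x * cnj (h x) - h x * cnj (q x) - q x * cnj (h x) + q x * cnj (q x))"
    by (simp add: algebra_simps)
  also have "\<dots> = integral {0..1} (\<lambda>x. h x * cnj (h x)) - I2 - cnj I2 + (\<Sum>j\<in>K. cnj (a j) * a j)"
    by (subst integral_add integral_diff, (auto intro!: int01 continuous_intros h cq)[2])+
       (simp add: i2 i3 i4)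
  also have "integral {0..1} (\<lambda>x. h x * cnj (h x)) = integral {0..1} (\<lambda>x. complex_of_real ((cmod (h x))\<^sup>2))"
    by (simp only: complex_norm_square)
  also have "\<dots> = complex_of_real (integral {0..1} (\<lambda>x. (cmod (h x))\<^sup>2))"
    by (rule integral_of_real_c) (auto intro!: int01 continuous_intros h)
  also have "cnj I2 = (\<Sum>j\<in>K. a j * cnj (fcoef h j))" unfolding I2_def by simp
  finally have "complex_of_real (integral {0..1} (\<lambda>x. (cmod (h x - q x))\<^sup>2))
     = complex_of_real (integral {0..1} (\<lambda>x. (cmod (h x))\<^sup>2)) - (\<Sum>j\<in>K. cnj (a j) * fcoef h j)
       - (\<Sum>j\<in>K. a j * cnj (fcoef h j)) + (\<Sum>j\<in>K. cnj (a j) * a j)" unfolding I2_def .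
  also have "\<dots> = complex_of_real (integral {0..1} (\<lambda>x. (cmod (h x))\<^sup>2) - (\<Sum>j\<in>K. (cmod (fcoef h j))\<^sup>2)
       + (\<Sum>j\<in>K. (cmod (a j - fcoef h j))\<^sup>2))"
  proof -
    let ?F = "fcoef h"
    have e1: "\<And>j. (a j - ?F j) * cnj (a j - ?F j) - ?F j * cnj (?F j) = cnj (a j) * a j - cnj (a j) * ?F j - a j * cnj (?F j)"
      by (simp add: algebra_simps)
    have "complex_of_real (integral {0..1} (\<lambda>x. (cmod (h x))\<^sup>2) - (\<Sum>j\<in>K. (cmod (?F j))\<^sup>2)
       + (\<Sum>j\<in>K. (cmod (a j - ?F j))\<^sup>2)) = complex_of_real (integral {0..1} (\<lambda>x. (cmod (h x))\<^sup>2))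
        - (\<Sum>j\<in>K. complex_of_real ((cmod (?F j))\<^sup>2)) + (\<Sum>j\<in>K. complex_of_real ((cmod (a j - ?F j))\<^sup>2))"
      by (simp only: of_real_add of_real_diff of_real_sum)
    also have "\<dots> = complex_of_real (integral {0..1} (\<lambda>x. (cmod (h x))\<^sup>2))
        + ((\<Sum>j\<in>K. (a j - ?F j) * cnj (a j - ?F j)) - (\<Sum>j\<in>K. ?F j * cnj (?F j)))"
      by (simp only: complex_norm_square) simp
    also have "(\<Sum>j\<in>K. (a j - ?F j) * cnj (a j - ?F j)) - (\<Sum>j\<in>K. ?F j * cnj (?F j))
       = (\<Sum>j\<in>K. cnj (a j) * a j) - (\<Sum>j\<in>K. cnj (a j) * ?F j) - (\<Sum>j\<in>K. a j * cnj (?F j))"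
      by (simp only: sum_subtractf[symmetric] e1)
    finally show ?thesis by simp
  qed
  finally show ?thesis unfolding q_def by (simp only: of_real_eq_iff)
qed

definition tp :: "(real \<Rightarrow> complex) \<Rightarrow> bool" where
  "tp q \<longleftrightarrow> (\<exists>K a. finite K \<and> (\<forall>x. q x = (\<Sum>j\<in>K. a j * ee j x)))"

lemma tp_ee: "tp (\<lambda>x. c * ee k x)"
  unfolding tp_def by (rule exI[of _ "{k}"], rule exI[of _ "\<lambda>_. c"]) simp

lemma tp_const: "tp (\<lambda>x. c)"
  using tp_ee[of c 0] by simp

lemma tp_add:
  assumes "tp f" "tp g" shows "tp (\<lambda>x. f x + g x)"
proof -
  obtain K1 a1 where K1: "finite K1" "\<And>x. f x = (\<Sum>j\<in>K1. a1 j * ee j x)" using assms(1) unfolding tp_def by blast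
  obtain K2 a2 where K2: "finite K2" "\<And>x. g x = (\<Sum>j\<in>K2. a2 j * ee j x)" using assms(2) unfolding tp_def by blast
  define a where "a j = (if j \<in> K1 then a1 j else 0) + (if j \<in> K2 then a2 j else 0)" for j
  have s1: "(\<Sum>j\<in>K1 \<union> K2. (if j \<in> K1 then a1 j else 0) * ee j x) = (\<Sum>j\<in>K1. a1 j * ee j x)" for x
    by (subst sum.mono_neutral_right[of "K1 \<union> K2" K1]) (auto simp: K1 K2)
  have s2: "(\<Sum>j\<in>K1 \<union> K2. (if j \<in> K2 then a2 j else 0) * ee j x) = (\<Sum>j\<in>K2. a2 j * ee j x)" for x
    by (subst sum.mono_neutral_right[of "K1 \<union> K2" K2]) (auto simp: K1 K2)
  have "f x + g x = (\<Sum>j\<in>K1 \<union> K2. a j * ee j x)" for x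
    unfolding a_def distrib_right sum.distrib s1 s2 K1(2) K2(2) ..
  then show ?thesis unfolding tp_def using K1 K2 by blast
qed

lemma tp_sum:
  assumes "finite S" "\<And>i. i \<in> S \<Longrightarrow> tp (f i)"
  shows "tp (\<lambda>x. \<Sum>i\<in>S. f i x)"
  using assms
proof (induction S rule: finite_induct)
  case empty then show ?case using tp_const[of 0] by simp
next
  case (insert i S) then show ?case by (simp add: tp_add)
qed

lemma tp_cong: "tp f \<Longrightarrow> (\<And>x. f x = g x) \<Longrightarrow> tp g"
  unfolding tp_def by auto

lemma tp_mult:
  assumes "tp f" "tp g" shows "tp (\<lambda>x. f x * g x)"
proof -
  obtain K1 a1 where K1: "finite K1" "\<And>x. f x = (\<Sum>j\<in>K1. a1 j * ee j x)" using assms(1) unfolding tp_def by blast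
  obtain K2 a2 where K2: "finite K2" "\<And>x. g x = (\<Sum>j\<in>K2. a2 j * ee j x)" using assms(2) unfolding tp_def by blast
  have "tp (\<lambda>x. \<Sum>j\<in>K1. \<Sum>i\<in>K2. (a1 j * a2 i) * ee (j + i) x)"
    by (intro tp_sum K1 K2 tp_ee)
  then show ?thesis
    by (rule tp_cong) (simp add: K1(2) K2(2) sum_product ee_add mult_ac)
qed

lemma ee1_cis: "ee 1 x = cis (2 * pi * x)"
  by (simp add: ee_def cis_conv_exp mult_ac)

lemma ofreal_Re: "complex_of_real (Re z) = (z + cnj z) / 2" by (simp add: complex_eq_iff)
lemma ofreal_Im: "complex_of_real (Im z) = (z - cnj z) / (2 * \<i>)" by (simp add: complex_eq_iff)

lemma tp_Re: "tp (\<lambda>x. complex_of_real (Re (ee 1 x)))"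
proof -
  have "tp (\<lambda>x. (1/2) * ee 1 x + (1/2) * ee (-1) x)" by (intro tp_add tp_ee)
  then show ?thesis
  proof (rule tp_cong)
    fix x
    show "1 / 2 * ee 1 x + 1 / 2 * ee (- 1) x = complex_of_real (Re (ee 1 x))"
      unfolding ofreal_Re cnj_ee by (simp add: add_divide_distrib)
  qed
qed

lemma tp_Im: "tp (\<lambda>x. complex_of_real (Im (ee 1 x)))"
proof -
  have "tp (\<lambda>x. (1/(2*\<i>)) * ee 1 x + (-1/(2*\<i>)) * ee (-1) x)" by (intro tp_add tp_ee)
  then show ?thesis
  proof (rule tp_cong)
    fix x
    show "1 / (2*\<i>) * ee 1 x + -1 / (2*\<i>) * ee (- 1) x = complex_of_real (Im (ee 1 x))"
      unfolding ofreal_Im cnj_ee by (simp add: diff_divide_distrib algebra_simps)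
  qed
qed

lemma tp_rpf:
  fixes r :: "complex \<Rightarrow> real"
  assumes "real_polynomial_function r"
  shows "tp (\<lambda>x. complex_of_real (r (ee 1 x)))"
  using assms
proof (induction r rule: real_polynomial_function.induct)
  case (linear r)
  then interpret bounded_linear r .
  have eq: "r z = Re z * r 1 + Im z * r \<i>" for z
  proof -
    have "z = Re z *\<^sub>R 1 + Im z *\<^sub>R \<i>" by (simp add: complex_eq_iff)
    then have "r z = r (Re z *\<^sub>R 1 + Im z *\<^sub>R \<i>)" by simp
    also have "\<dots> = Re z * r 1 + Im z * r \<i>" by (simp add: add scale)
    finally show ?thesis .
  qed
  have "tp (\<lambda>x. complex_of_real (Re (ee 1 x)) * complex_of_real (r 1) + complex_of_real (Im (ee 1 x)) * complex_of_real (r \<i>))"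
    by (intro tp_add tp_mult tp_Re tp_Im tp_const)
  then show ?case
  proof (rule tp_cong)
    fix x
    show "complex_of_real (Re (ee 1 x)) * complex_of_real (r 1) + complex_of_real (Im (ee 1 x)) * complex_of_real (r \<i>) = complex_of_real (r (ee 1 x))"
      unfolding eq[of "ee 1 x"] by simp
  qed
next
  case (const c) then show ?case by (rule tp_const)
next
  case (add f g) then show ?case by (simp add: tp_add)
next
  case (mult f g) then show ?case by (simp add: tp_mult)
qed

lemma tp_poly:
  fixes p :: "complex \<Rightarrow> complex"
  assumes "polynomial_function p"
  shows "tp (\<lambda>x. p (ee 1 x))"
proof -
  have "real_polynomial_function (Re \<circ> p)" "real_polynomial_function (Im \<circ> p)"
    using assms unfolding polynomial_function_def by (auto intro: bounded_linear_Re bounded_linear_Im)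
  then have "tp (\<lambda>x. complex_of_real (Re (p (ee 1 x))) + complex_of_real (Im (p (ee 1 x))) * \<i>)"
    by (intro tp_add tp_mult tp_const) (auto dest: tp_rpf)
  then show ?thesis by (rule tp_cong) (simp add: complex_eq_iff)
qed

lemma trig_approx:
  fixes h :: "real \<Rightarrow> complex"
  assumes h: "continuous_on {0..1} h" and h01: "h 0 = h 1" and e: "e > 0"
  shows "\<exists>K a. finite K \<and> (\<forall>x\<in>{0..1}. cmod (h x - (\<Sum>j\<in>K. a j * ee j x)) < e)"
proof -
  define S :: "complex set" where "S = sphere 0 1"
  have reS: "-1 \<le> Re z \<and> Re z \<le> 1" if "z \<in> S" for z
    using that abs_Re_le_cmod[of z] by (auto simp: S_def)
  define G where "G z = (if - Im z \<le> 0 then h (arccos (Re z) / (2*pi)) else h (1 - arccos (Re z) / (2*pi)))" for z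
  have "continuous_on S G"
    unfolding G_def
  proof (rule continuous_on_cases_le)
    have "continuous_on {z \<in> S. - Im z \<le> 0} (h \<circ> (\<lambda>z. arccos (Re z) / (2*pi)))"
    proof (rule continuous_on_compose)
      show "continuous_on {z \<in> S. - Im z \<le> 0} (\<lambda>z. arccos (Re z) / (2*pi))"
        by (intro continuous_intros) (auto dest: reS)
      have "(\<lambda>z. arccos (Re z) / (2*pi)) ` {z \<in> S. - Im z \<le> 0} \<subseteq> {0..1}"
        using arccos_lbound arccos_ubound reS by (fastforce simp: field_simps)
      then show "continuous_on ((\<lambda>z. arccos (Re z) / (2*pi)) ` {z \<in> S. - Im z \<le> 0}) h"
        using h continuous_on_subset by blast
    qed
    then show "continuous_on {z \<in> S. - Im z \<le> 0} (\<lambda>z. h (arccos (Re z) / (2*pi)))" by (simp add: o_def)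
    have "continuous_on {z \<in> S. 0 \<le> - Im z} (h \<circ> (\<lambda>z. 1 - arccos (Re z) / (2*pi)))"
    proof (rule continuous_on_compose)
      show "continuous_on {z \<in> S. 0 \<le> - Im z} (\<lambda>z. 1 - arccos (Re z) / (2*pi))"
        by (intro continuous_intros) (auto dest: reS)
      have "(\<lambda>z. 1 - arccos (Re z) / (2*pi)) ` {z \<in> S. 0 \<le> - Im z} \<subseteq> {0..1}"
        using arccos_lbound arccos_ubound reS by (fastforce simp: field_simps)
      then show "continuous_on ((\<lambda>z. 1 - arccos (Re z) / (2*pi)) ` {z \<in> S. 0 \<le> - Im z}) h"
        using h continuous_on_subset by blast
    qed
    then show "continuous_on {z \<in> S. 0 \<le> - Im z} (\<lambda>z. h (1 - arccos (Re z) / (2*pi)))" by (simp add: o_def)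
    show "continuous_on S (\<lambda>z. - Im z)" by (intro continuous_intros)
    fix z assume z: "z \<in> S" "- Im z = 0"
    then have "Re z = 1 \<or> Re z = -1"
      by (auto simp: S_def cmod_def power2_eq_1_iff)
    then show "h (arccos (Re z) / (2 * pi)) = h (1 - arccos (Re z) / (2 * pi))"
      using h01 by auto
  qed
  then obtain p where p: "polynomial_function p" "\<forall>z\<in>S. norm (G z - p z) < e"
    using Stone_Weierstrass_polynomial_function[of S G e] e by (auto simp: S_def)
  obtain K a where K: "finite K" "\<And>x. p (ee 1 x) = (\<Sum>j\<in>K. a j * ee j x)"
    using tp_poly[OF p(1)] unfolding tp_def by blast
  have G_ee: "G (ee 1 x) = h x" if x: "x \<in> {0..1}" for x
  proof (cases "x \<le> 1/2 \<or> x = 1")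
    case True
    then have "0 \<le> sin (2*pi*x)"
    proof
      assume "x \<le> 1/2" then show ?thesis using x by (intro sin_ge_zero) auto
    qed simp
    moreover have "arccos (cos (2*pi*x)) / (2*pi) = x" if "x \<le> 1/2"
      using x that by (subst arccos_cos) auto
    ultimately show ?thesis using True h01 by (auto simp: G_def ee1_cis)
  next
    case False
    then have "sin (2*pi*x) < 0" using x by (intro sin_lt_zero) auto
    moreover have "arccos (cos (2*pi*x)) = 2*pi - 2*pi*x"
    proof -
      have "arccos (cos (2*pi*x)) = arccos (cos (2*pi - 2*pi*x))" by simp
      also have "\<dots> = 2*pi - 2*pi*x" using x False by (intro arccos_cos) auto
      finally show ?thesis .
    qed
    moreover have "1 - arccos (cos (2*pi*x)) / (2*pi) = x"
      unfolding calculation(2) by (simp add: field_simps)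
    ultimately show ?thesis by (simp add: G_def ee1_cis)
  qed
  have "ee 1 x \<in> S" for x by (simp add: S_def)
  then have "\<forall>x\<in>{0..1}. cmod (h x - (\<Sum>j\<in>K. a j * ee j x)) < e"
    using p(2) G_ee K(2) by metis
  then show ?thesis using K(1) by blast
qed

lemma has_sum_approx:
  assumes "(f has_sum s) A" "e > 0"
  shows "\<exists>X. finite X \<and> X \<subseteq> A \<and> (\<forall>Y. finite Y \<and> X \<subseteq> Y \<and> Y \<subseteq> A \<longrightarrow> dist (sum f Y) s < e)"
  using assms unfolding has_sum_def tendsto_iff eventually_finite_subsets_at_top by blast

lemma has_sumI_approx:
  fixes s :: "'b::{comm_monoid_add,metric_space}"
  assumes "\<And>e. e > 0 \<Longrightarrow> \<exists>X. finite X \<and> X \<subseteq> A \<and> (\<forall>Y. finite Y \<and> X \<subseteq> Y \<and> Y \<subseteq> A \<longrightarrow> dist (sum f Y) s < e)"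
  shows "(f has_sum s) A"
  using assms unfolding has_sum_def tendsto_iff eventually_finite_subsets_at_top by blast

lemma bessel_fin:
  assumes h: "continuous_on {0..1} h" and K: "finite K"
  shows "(\<Sum>j\<in>K. (cmod (fcoef h j))\<^sup>2) \<le> integral {0..1} (\<lambda>x. (cmod (h x))\<^sup>2)"
proof -
  have "0 \<le> integral {0..1} (\<lambda>x. (cmod (h x - (\<Sum>j\<in>K. fcoef h j * ee j x)))\<^sup>2)"
    by (rule integral_nonneg) (auto intro!: int01 continuous_intros h)
  then show ?thesis unfolding best_approx[OF h K] by simp
qed

lemma parseval_approx:
  assumes h: "continuous_on {0..1} h" and h01: "h 0 = h 1" and e: "e > 0"
  shows "\<exists>K0. finite K0 \<and> (\<forall>K. finite K \<and> K0 \<subseteq> K \<longrightarrow>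
     integral {0..1} (\<lambda>x. (cmod (h x))\<^sup>2) - (\<Sum>j\<in>K. (cmod (fcoef h j))\<^sup>2) \<le> e)"
proof -
  obtain K0 a where K0: "finite K0" "\<forall>x\<in>{0..1}. cmod (h x - (\<Sum>j\<in>K0. a j * ee j x)) < sqrt e"
    using trig_approx[OF h h01, of "sqrt e"] e by auto
  have "integral {0..1} (\<lambda>x. (cmod (h x))\<^sup>2) - (\<Sum>j\<in>K. (cmod (fcoef h j))\<^sup>2) \<le> e"
    if K: "finite K" "K0 \<subseteq> K" for K
  proof -
    define a' where "a' j = (if j \<in> K0 then a j else 0)" for j
    have q: "(\<Sum>j\<in>K. a' j * ee j x) = (\<Sum>j\<in>K0. a j * ee j x)" for x
      unfolding a'_def by (subst sum.mono_neutral_right[of K K0]) (use K in auto)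
    have "integral {0..1} (\<lambda>x. (cmod (h x - (\<Sum>j\<in>K. a' j * ee j x)))\<^sup>2) \<le> integral {0..1} (\<lambda>x::real. e)"
    proof (rule integral_le)
      show "(\<lambda>x. (cmod (h x - (\<Sum>j\<in>K. a' j * ee j x)))\<^sup>2) integrable_on {0..1}"
        by (auto intro!: int01 continuous_intros h)
      show "(\<lambda>x. e) integrable_on {0..1::real}" by (rule integrable_const_ivl)
      fix x :: real assume "x \<in> {0..1}"
      then have "cmod (h x - (\<Sum>j\<in>K. a' j * ee j x)) < sqrt e" using K0(2) q by simp
      then have "(cmod (h x - (\<Sum>j\<in>K. a' j * ee j x)))\<^sup>2 \<le> (sqrt e)\<^sup>2"
        by (intro power_mono) auto
      then show "(cmod (h x - (\<Sum>j\<in>K. a' j * ee j x)))\<^sup>2 \<le> e" using e by simp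
    qed
    then have "integral {0..1} (\<lambda>x. (cmod (h x))\<^sup>2) - (\<Sum>j\<in>K. (cmod (fcoef h j))\<^sup>2)
       + (\<Sum>j\<in>K. (cmod (a' j - fcoef h j))\<^sup>2) \<le> e"
      unfolding best_approx[OF h K(1)] by simp
    moreover have "0 \<le> (\<Sum>j\<in>K. (cmod (a' j - fcoef h j))\<^sup>2)" by (intro sum_nonneg) auto
    ultimately show ?thesis by linarith
  qed
  then show ?thesis using K0(1) by blast
qed

theorem parseval:
  assumes h: "continuous_on {0..1} h" and h01: "h 0 = h 1"
  shows "((\<lambda>k. (cmod (fcoef h k))\<^sup>2) has_sum integral {0..1} (\<lambda>x. (cmod (h x))\<^sup>2)) UNIV"
proof (rule has_sumI_approx)
  fix e :: real assume e: "e > 0"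
  obtain K0 where K0: "finite K0" "\<forall>K. finite K \<and> K0 \<subseteq> K \<longrightarrow>
     integral {0..1} (\<lambda>x. (cmod (h x))\<^sup>2) - (\<Sum>j\<in>K. (cmod (fcoef h j))\<^sup>2) \<le> e/2"
    using parseval_approx[OF h h01, of "e/2"] e by auto
  have "dist (\<Sum>j\<in>K. (cmod (fcoef h j))\<^sup>2) (integral {0..1} (\<lambda>x. (cmod (h x))\<^sup>2)) < e"
    if "finite K" "K0 \<subseteq> K" for K
    using K0(2) that bessel_fin[OF h that(1)] e by (auto simp: dist_real_def)
  then show "\<exists>X. finite X \<and> X \<subseteq> UNIV \<and> (\<forall>Y. finite Y \<and> X \<subseteq> Y \<and> Y \<subseteq> UNIV \<longrightarrow>
     dist (\<Sum>j\<in>Y. (cmod (fcoef h j))\<^sup>2) (integral {0..1} (\<lambda>x. (cmod (h x))\<^sup>2)) < e)"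
    using K0(1) by blast
qed

theorem fcoef_unique:
  assumes h: "continuous_on {0..1} h" and h01: "h 0 = h 1" and z: "\<And>k. fcoef h k = 0"
    and x: "x \<in> {0..1}"
  shows "h x = 0"
proof -
  have "integral {0..1} (\<lambda>x. (cmod (h x))\<^sup>2) = 0"
    using has_sum_unique[OF parseval[OF h h01] has_sum_0[of UNIV "\<lambda>k. (cmod (fcoef h k))\<^sup>2"]] z by simp
  then have "\<forall>x\<in>{0..1}. (cmod (h x))\<^sup>2 = 0"
    by (subst (asm) integral_eq_0_iff) (auto intro!: continuous_intros h)
  then show ?thesis using x by simp
qed

lemma norm5: "norm (a+b+c+d+e) \<le> norm a + norm b + norm c + norm d + norm (e::'a::real_normed_vector)"
  using norm_triangle_ineq[of "a+b+c+d" e] norm_triangle_ineq[of "a+b+c" d]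
    norm_triangle_ineq[of "a+b" c] norm_triangle_ineq[of a b] by linarith

theorem inversion0:
  assumes h: "continuous_on {0..1} \<phi>" and h01: "\<phi> 0 = \<phi> 1"
    and sm: "(\<lambda>l. norm (fcoef \<phi> l)) summable_on UNIV"
  shows "infsum (fcoef \<phi>) UNIV = \<phi> 0"
proof (rule ccontr)
  define F where "F = fcoef \<phi>"
  define L where "L = infsum F UNIV"
  define T where "T = infsum (\<lambda>l. norm (F l)) UNIV"
  define S where "S K x = (\<Sum>j\<in>K. F j * ee j x)" for K x
  assume "infsum (fcoef \<phi>) UNIV \<noteq> \<phi> 0"
  then have eta: "cmod (\<phi> 0 - L) > 0" unfolding L_def F_def by simp
  define \<eta> where "\<eta> = cmod (\<phi> 0 - L)"
  have hasN: "((\<lambda>l. norm (F l)) has_sum T) UNIV" using sm unfolding T_def F_def by (rule has_sum_infsum)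
  have hasF: "(F has_sum L) UNIV" unfolding L_def F_def by (rule has_sum_infsum, rule abs_summable_summable, rule sm)
  obtain X0 where X0: "finite X0" "\<forall>Y. finite Y \<and> X0 \<subseteq> Y \<longrightarrow> dist (\<Sum>l\<in>Y. norm (F l)) T < \<eta>/16"
    using has_sum_approx[OF hasN, of "\<eta>/16"] eta \<eta>_def by auto
  obtain X1 where X1: "finite X1" "\<forall>Y. finite Y \<and> X1 \<subseteq> Y \<longrightarrow> dist (sum F Y) L < \<eta>/8"
    using has_sum_approx[OF hasF, of "\<eta>/8"] eta \<eta>_def by auto
  define K1 where "K1 = X0 \<union> X1"
  have K1: "finite K1" using X0 X1 K1_def by auto
  have S0: "S K 0 = sum F K" for K unfolding S_def by simp
  have sK1: "cmod (S K1 0 - L) < \<eta>/8" using X1 K1 unfolding S0 K1_def by (auto simp: dist_norm)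
  have tail: "cmod (S K x - S K1 x) < \<eta>/8" if K: "finite K" "K1 \<subseteq> K" for K x
  proof -
    have "S K x - S K1 x = (\<Sum>j\<in>K - K1. F j * ee j x)"
      unfolding S_def using K by (simp add: sum_diff)
    also have "cmod \<dots> \<le> (\<Sum>j\<in>K - K1. norm (F j))"
      by (rule order_trans[OF norm_sum]) (simp add: norm_mult)
    also have "\<dots> = (\<Sum>j\<in>K. norm (F j)) - (\<Sum>j\<in>K1. norm (F j))"
      using K by (simp add: sum_diff)
    also have "\<dots> < \<eta>/8"
    proof -
      have A: "dist (\<Sum>j\<in>K. norm (F j)) T < \<eta>/16" using X0(2) K K1_def by auto
      have B: "dist (\<Sum>j\<in>K1. norm (F j)) T < \<eta>/16" using X0(2) K1 K1_def by auto
      show ?thesis using A B unfolding dist_real_def abs_less_iff by linarith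
    qed
    finally show ?thesis .
  qed
  have cS: "continuous_on {0..1} (S K1)" unfolding S_def by (intro continuous_intros)
  obtain d1 where d1: "d1 > 0" "\<forall>x\<in>{0..1}. dist x 0 < d1 \<longrightarrow> dist (\<phi> x) (\<phi> 0) < \<eta>/4"
    using h eta unfolding continuous_on_iff \<eta>_def by (metis atLeastAtMost_iff divide_pos_pos order_refl zero_less_numeral zero_le_one)
  obtain d2 where d2: "d2 > 0" "\<forall>x\<in>{0..1}. dist x 0 < d2 \<longrightarrow> dist (S K1 x) (S K1 0) < \<eta>/8"
    using cS eta unfolding continuous_on_iff \<eta>_def by (metis atLeastAtMost_iff divide_pos_pos order_refl zero_less_numeral zero_le_one)
  define \<delta> where "\<delta> = min (d1/2) (min (d2/2) 1)"
  have \<delta>: "\<delta> > 0" "\<delta> \<le> 1" using d1 d2 \<delta>_def by auto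
  have lower: "(\<eta>/4)\<^sup>2 \<le> (cmod (\<phi> x - S K x))\<^sup>2" if K: "finite K" "K1 \<subseteq> K" and x: "x \<in> {0..\<delta>}" for K x
  proof -
    have x01: "x \<in> {0..1}" and xd1: "dist x 0 < d1" and xd2: "dist x 0 < d2"
      using x \<delta>_def d1 d2 by (auto simp: dist_real_def)
    have a: "cmod (\<phi> 0 - \<phi> x) < \<eta>/4" using d1(2) x01 xd1 norm_minus_commute[of "\<phi> 0" "\<phi> x"] by (simp add: dist_norm)
    have b: "cmod (S K x - S K1 x) < \<eta>/8" by (rule tail[OF K])
    have c: "cmod (S K1 x - S K1 0) < \<eta>/8" using d2(2) x01 xd2 by (simp add: dist_norm)
    have "\<phi> 0 - L = (\<phi> 0 - \<phi> x) + (\<phi> x - S K x) + (S K x - S K1 x) + (S K1 x - S K1 0) + (S K1 0 - L)"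
      by simp
    then have "\<eta> \<le> cmod (\<phi> 0 - \<phi> x) + cmod (\<phi> x - S K x) + cmod (S K x - S K1 x) + cmod (S K1 x - S K1 0) + cmod (S K1 0 - L)"
      unfolding \<eta>_def by (metis norm5)
    moreover have "\<eta> > 0" using eta \<eta>_def by simp
    ultimately have "\<eta>/4 \<le> cmod (\<phi> x - S K x)" using a b c sK1 by linarith
    then show ?thesis using eta \<eta>_def by (intro power_mono) auto
  qed
  have cI: "continuous_on {0..1} (\<lambda>x. (cmod (\<phi> x - S K x))\<^sup>2)" for K
    unfolding S_def by (intro continuous_intros h)
  have lowint: "\<delta> * (\<eta>/4)\<^sup>2 \<le> integral {0..1} (\<lambda>x. (cmod (\<phi> x - S K x))\<^sup>2)" if K: "finite K" "K1 \<subseteq> K" for K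
  proof -
    have "\<delta> * (\<eta>/4)\<^sup>2 = integral {0..\<delta>} (\<lambda>x. (\<eta>/4)\<^sup>2)"
      using has_integral_const_real[of "(\<eta>/4)\<^sup>2" 0 \<delta>] \<delta> by (simp add: integral_unique)
    also have "\<dots> \<le> integral {0..\<delta>} (\<lambda>x. (cmod (\<phi> x - S K x))\<^sup>2)"
      using \<delta> by (intro integral_le lower[OF K]) (auto intro!: integrable_continuous_interval continuous_on_subset[OF cI])
    also have "\<dots> \<le> integral {0..1} (\<lambda>x. (cmod (\<phi> x - S K x))\<^sup>2)"
      using \<delta> by (intro integral_subset_le) (auto intro!: integrable_continuous_interval continuous_on_subset[OF cI])
    finally show ?thesis .
  qed
  have pos: "\<delta> * (\<eta>/4)\<^sup>2 / 2 > 0" using \<delta> eta \<eta>_def by auto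
  obtain K2 where K2: "finite K2" "\<forall>K. finite K \<and> K2 \<subseteq> K \<longrightarrow>
     integral {0..1} (\<lambda>x. (cmod (\<phi> x))\<^sup>2) - (\<Sum>j\<in>K. (cmod (fcoef \<phi> j))\<^sup>2) \<le> \<delta> * (\<eta>/4)\<^sup>2 / 2"
    using parseval_approx[OF h h01 pos] by blast
  define K where "K = K1 \<union> K2"
  have K: "finite K" "K1 \<subseteq> K" "K2 \<subseteq> K" using K1 K2 K_def by auto
  have "integral {0..1} (\<lambda>x. (cmod (\<phi> x - S K x))\<^sup>2) = integral {0..1} (\<lambda>x. (cmod (\<phi> x))\<^sup>2) - (\<Sum>j\<in>K. (cmod (fcoef \<phi> j))\<^sup>2)"
    unfolding S_def F_def using best_approx[OF h K(1), of "fcoef \<phi>"] by simp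
  then show False using lowint[OF K(1,2)] K2(2) K pos by force
qed

lemma Phi_on_piece:
  assumes h01: "\<phi> 0 = \<phi> (1::real)" and y: "y \<in> {of_int n..of_int n + 1}"
  shows "\<phi> (frac y) = \<phi> (y - of_int n)"
proof (cases "y = of_int n + 1")
  case True
  then have "frac y = 0" by (metis frac_add_of_int_left frac_eq_0_iff Ints_1 add.commute of_int_1 frac_of_int)
  then show ?thesis using True h01 by simp
next
  case False
  then have "\<lfloor>y\<rfloor> = n" using y by (intro floor_unique) auto
  then show ?thesis by (simp add: frac_def)
qed

lemma Phi_cont:
  assumes h: "continuous_on {0..1} \<phi>" and h01: "\<phi> 0 = \<phi> (1::real)"
  shows "continuous_on UNIV (\<lambda>y. \<phi> (frac y))"
proof (rule continuous_at_imp_continuous_on, rule ballI)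
  fix y :: real
  have piece: "continuous_on {of_int n..of_int n + 1} (\<lambda>y. \<phi> (frac y))" for n :: int
  proof -
    have "continuous_on {of_int n..of_int n + 1} (\<lambda>y. \<phi> (y - of_int n))"
    proof (rule continuous_on_compose2[OF h])
      show "continuous_on {real_of_int n..real_of_int n + 1} (\<lambda>y. y - real_of_int n)" by (intro continuous_intros)
    qed auto
    then show ?thesis by (rule continuous_on_eq) (simp add: Phi_on_piece[OF h01])
  qed
  define n where "n = \<lfloor>y\<rfloor>"
  have "continuous_on ({of_int (n - 1)..of_int (n-1) + 1} \<union> {of_int n..of_int n + 1}) (\<lambda>y. \<phi> (frac y))"
    by (intro continuous_on_closed_Un piece) auto
  moreover have "{of_int (n - 1)..of_int (n-1) + 1} \<union> {of_int n..of_int n + 1} = {of_int n - 1..of_int n + (1::real)}"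
    by auto
  moreover have "y \<in> interior {of_int n - 1..of_int n + (1::real)}"
    unfolding n_def interior_atLeastAtMost_real by simp linarith
  ultimately show "isCont (\<lambda>y. \<phi> (frac y)) y" by (metis continuous_on_interior)
qed

lemma periodic_int:
  assumes "\<And>y. G (y + 1) = G (y::real)"
  shows "G (y + of_int n) = G y"
proof (induction n arbitrary: y rule: int_induct[where k = 0])
  case base then show ?case by simp
next
  case (step1 i) then show ?case using assms[of "y + of_int i"] by (simp add: add.assoc)
next
  case (step2 i) then show ?case using assms[of "y + of_int (i - 1)"] by (simp add: add.assoc)
qed

lemma periodic_shift:
  fixes G :: "real \<Rightarrow> 'a::euclidean_space"
  assumes c: "continuous_on UNIV G" and p: "\<And>y. G (y + 1) = G y"
  shows "integral {0..1} (\<lambda>x. G (x + c)) = integral {0..1} G"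
proof -
  define d where "d = frac c"
  have d: "0 \<le> d" "d < 1" unfolding d_def by (auto simp: frac_lt_1)
  have "G (x + c) = G (x + d)" for x
    using periodic_int[of G, OF p, of "x + d" "\<lfloor>c\<rfloor>"] unfolding d_def frac_def by (simp add: algebra_simps)
  then have "integral {0..1} (\<lambda>x. G (x + c)) = integral {0..1} (\<lambda>x. G (x + d))" by simp
  also have "\<dots> = integral {d..1+d} G"
    using integral_shift_real_ivl[of d d "1+d" G] by simp
  also have "\<dots> = integral {d..1} G + integral {1..1+d} G"
  proof -
    have "G integrable_on {d..1+d}" by (rule integrable_continuous_interval, rule continuous_on_subset[OF c]) auto
    then show ?thesis using Henstock_Kurzweil_Integration.integral_combine[where a=d and c=1 and b="1+d" and f=G] d by simp
  qed
  also have "integral {1..1+d} G = integral {0..d} (\<lambda>x. G (x + 1))"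
    using integral_shift_real_ivl[of 1 1 "1+d" G] by simp
  also have "\<dots> = integral {0..d} G" using p by simp
  also have "integral {d..1} G + integral {0..d} G = integral {0..1} G"
  proof -
    have "G integrable_on {0..1}" by (rule integrable_continuous_interval, rule continuous_on_subset[OF c]) auto
    then show ?thesis using Henstock_Kurzweil_Integration.integral_combine[where a=0 and c=d and b=1 and f=G] d by (simp add: add.commute)
  qed
  finally show ?thesis .
qed

lemma ee_add_arg: "ee k (x + y) = ee k x * ee k y"
  unfolding ee_def by (simp add: exp_add[symmetric] algebra_simps)

lemma fcoef_shift:
  assumes c: "continuous_on UNIV \<Psi>" and p: "\<And>y. \<Psi> (y + 1) = \<Psi> y"
  shows "fcoef (\<lambda>x. \<Psi> (x - a)) n = cnj (ee n a) * fcoef \<Psi> n"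
proof -
  define G where "G y = \<Psi> y * cnj (ee n y)" for y
  have cG: "continuous_on UNIV G" unfolding G_def by (intro continuous_intros c)
  have pG: "G (y + 1) = G y" for y unfolding G_def by (simp add: p ee_one_shift)
  have "fcoef (\<lambda>x. \<Psi> (x - a)) n = integral {0..1} (\<lambda>x. cnj (ee n a) * G (x + (- a)))"
    unfolding fcoef_alt G_def
  proof (rule integral_cong)
    fix x
    have "ee n x = ee n (x - a) * ee n a" using ee_add_arg[of n "x-a" a] by simp
    then show "\<Psi> (x - a) * cnj (ee n x) = cnj (ee n a) * (\<Psi> (x + - a) * cnj (ee n (x + - a)))"
      by simp
  qed
  also have "\<dots> = cnj (ee n a) * integral {0..1} G"
    using periodic_shift[OF cG pG, of "-a"] by simp
  finally show ?thesis unfolding G_def fcoef_alt .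
qed

lemma geom_ee:
  assumes N: "N > 0"
  shows "(\<Sum>j<2*N. ee d (real j / (2 * real N))) = (if (2 * int N) dvd d then of_nat (2*N) else 0)"
proof -
  define w where "w = ee d (1 / (2 * real N))"
  have pw: "ee d (real j / (2 * real N)) = w ^ j" for j
    unfolding w_def ee_def by (simp add: exp_of_nat_mult[symmetric] algebra_simps)
  have w2N: "w ^ (2*N) = 1" using pw[of "2*N"] N by simp
  have "w = 1 \<longleftrightarrow> (2 * int N) dvd d"
  proof
    assume "w = 1"
    then obtain m :: int where m: "2 * pi * real_of_int d / (2 * real N) = real_of_int (2 * m) * pi"
      unfolding w_def ee_def exp_eq_1 by (auto simp: field_simps)
    then have "real_of_int d = real_of_int (2 * int N * m)" using N by (simp add: field_simps)
    then have "d = 2 * int N * m" by (simp only: of_int_eq_iff)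
    then show "(2 * int N) dvd d" by simp
  next
    assume "(2 * int N) dvd d"
    then obtain m where "d = 2 * int N * m" by blast
    moreover have "\<i> * 2 * complex_of_real pi * of_int (2 * int N * m) * complex_of_real (1 / (2 * real N)) = \<i> * (of_int m * (of_real pi * 2))"
      using N by (simp add: field_simps)
    ultimately show "w = 1" unfolding w_def ee_def by simp
  qed
  then show ?thesis unfolding pw sum_gp_strict using w2N by auto
qed

definition Psi :: "nat \<Rightarrow> (real \<Rightarrow> complex) \<Rightarrow> real \<Rightarrow> complex" where
  "Psi N \<phi> y = sN N y * \<phi> (frac y)"

definition aa :: "nat \<Rightarrow> nat \<Rightarrow> real" where
  "aa N j = real j / (2 * real N)"

definition Rk :: "nat \<Rightarrow> (real \<Rightarrow> complex) \<Rightarrow> int \<Rightarrow> real \<Rightarrow> complex" where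
  "Rk N \<phi> k x = (\<Sum>j<2*N. ee k (aa N j) * Psi N \<phi> (x - aa N j))"

definition Ek :: "nat \<Rightarrow> (real \<Rightarrow> complex) \<Rightarrow> int \<Rightarrow> real \<Rightarrow> complex" where
  "Ek N \<phi> k x = ee k x - Rk N \<phi> k x"

definition DD :: "nat \<Rightarrow> (real \<Rightarrow> complex) \<Rightarrow> int \<Rightarrow> int \<Rightarrow> complex" where
  "DD N \<phi> k n = (if n = k then 1 else 0) - mu N \<phi> n * (if (2 * int N) dvd (k - n) then 1 else 0)"

lemma finite_BN[simp]: "finite (BN N)" unfolding BN_def by simp

lemma sN_ee: "sN N y = (1 / (2 * of_nat N)) * (\<Sum>b\<in>BN N. ee b y)"
  unfolding sN_def ee_def ..

lemma sN_cont[continuous_intros]: "continuous_on S (sN N)"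
  unfolding sN_ee[abs_def] by (intro continuous_intros)

lemma sN_per: "sN N (y + 1) = sN N y"
  unfolding sN_ee by (simp add: ee_one_shift)

lemma frac_phi: "\<phi> 0 = \<phi> (1::real) \<Longrightarrow> x \<in> {0..1} \<Longrightarrow> \<phi> (frac x) = \<phi> x"
  using Phi_on_piece[of \<phi> x 0] by simp

lemma fcoef_cmult: "fcoef (\<lambda>x. c * g x) n = c * fcoef g n"
  unfolding fcoef_def by (simp add: mult.assoc)

lemma fcoef_diff: "continuous_on {0..1} g \<Longrightarrow> continuous_on {0..1} h \<Longrightarrow>
   fcoef (\<lambda>x. g x - h x) n = fcoef g n - fcoef h n"
  unfolding fcoef_alt by (subst integral_diff[symmetric]) (auto intro!: int01 continuous_intros simp: algebra_simps)

lemma fcoef_sum: "finite I \<Longrightarrow> (\<And>i. i \<in> I \<Longrightarrow> continuous_on {0..1} (g i)) \<Longrightarrow>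
   fcoef (\<lambda>x. \<Sum>i\<in>I. g i x) n = (\<Sum>i\<in>I. fcoef (g i) n)"
  unfolding fcoef_alt sum_distrib_right by (subst integral_sum) (auto intro!: int01 continuous_intros)

lemma fcoef_cong: "(\<And>x. x \<in> {0..1} \<Longrightarrow> g x = h x) \<Longrightarrow> fcoef g n = fcoef h n"
  unfolding fcoef_def by (rule integral_cong) auto

lemma fcoef_ee: "fcoef (ee k) n = (if n = k then 1 else 0)"
  unfolding fcoef_alt orth by auto

lemma mu_alt: "mu N \<phi> n = (\<Sum>b\<in>BN N. fcoef \<phi> (n - b))"
  unfolding mu_def by (subst sum.reindex) (auto simp: inj_on_def)

context
  fixes N :: nat and \<phi> :: "real \<Rightarrow> complex"
  assumes N: "N > 0" and hc: "continuous_on {0..1} \<phi>" and h0: "\<phi> 0 = 1" and h1: "\<phi> 1 = 1"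
    and sm: "(\<lambda>l. norm (fcoef \<phi> l)) summable_on UNIV"
begin

lemma h01: "\<phi> 0 = \<phi> 1" using h0 h1 by simp

lemma Psi_cont[continuous_intros]: "continuous_on S (Psi N \<phi>)"
proof -
  have "continuous_on UNIV (Psi N \<phi>)" unfolding Psi_def[abs_def]
    by (intro continuous_intros Phi_cont[OF hc h01])
  then show ?thesis by (rule continuous_on_subset) simp
qed

lemma Psi_cont'[continuous_intros]: "continuous_on S g \<Longrightarrow> continuous_on S (\<lambda>x. Psi N \<phi> (g x))"
  by (rule continuous_on_compose2[OF Psi_cont]) auto

lemma Psi_per: "Psi N \<phi> (y + 1) = Psi N \<phi> y"
  unfolding Psi_def by (simp add: sN_per frac_1_eq)

lemma fcoef_Psi: "fcoef (Psi N \<phi>) n = mu N \<phi> n / (2 * of_nat N)"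
proof -
  have e: "\<And>b x. ee b x * cnj (ee n x) = cnj (ee (n - b) x)" by (subst ee_cnj_prod) (simp add: cnj_ee)
  have "fcoef (Psi N \<phi>) n = integral {0..1} (\<lambda>x. (1/(2 * of_nat N)) * (\<Sum>b\<in>BN N. \<phi> x * (ee b x * cnj (ee n x))))"
    unfolding fcoef_alt
  proof (rule integral_cong)
    fix x :: real assume x: "x \<in> {0..1}"
    show "Psi N \<phi> x * cnj (ee n x) = (1/(2 * of_nat N)) * (\<Sum>b\<in>BN N. \<phi> x * (ee b x * cnj (ee n x)))"
      unfolding Psi_def sN_ee frac_phi[OF h01 x] by (simp add: sum_distrib_left sum_distrib_right sum_divide_distrib mult_ac)
  qed
  also have "\<dots> = (1/(2 * of_nat N)) * (\<Sum>b\<in>BN N. integral {0..1} (\<lambda>x. \<phi> x * cnj (ee (n - b) x)))"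
    unfolding e by (subst integral_mult_right, subst integral_sum) (auto intro!: int01 continuous_intros hc)
  also have "\<dots> = mu N \<phi> n / (2 * of_nat N)"
    unfolding mu_alt fcoef_alt by simp
  finally show ?thesis .
qed

lemma fcoef_Rk: "fcoef (Rk N \<phi> k) n = mu N \<phi> n * (if (2 * int N) dvd (k - n) then 1 else 0)"
proof -
  have "fcoef (Rk N \<phi> k) n = (\<Sum>j<2*N. ee k (aa N j) * fcoef (\<lambda>x. Psi N \<phi> (x - aa N j)) n)"
    unfolding Rk_def[abs_def] by (subst fcoef_sum) (auto intro!: continuous_intros simp: fcoef_cmult)
  also have "\<dots> = (\<Sum>j<2*N. ee (k - n) (aa N j)) * (mu N \<phi> n / (2 * of_nat N))"
    unfolding fcoef_shift[OF Psi_cont Psi_per] fcoef_Psi sum_distrib_right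
    by (rule sum.cong) (auto simp: cnj_ee ee_add[symmetric] mult_ac)
  also have "\<dots> = mu N \<phi> n * (if (2 * int N) dvd (k - n) then 1 else 0)"
    unfolding aa_def geom_ee[OF N] using N by auto
  finally show ?thesis .
qed


lemma Rk_cont[continuous_intros]: "continuous_on S (Rk N \<phi> k)"
  unfolding Rk_def[abs_def] by (intro continuous_intros)

lemma Ek_cont[continuous_intros]: "continuous_on S (Ek N \<phi> k)"
  unfolding Ek_def[abs_def] by (intro continuous_intros)

lemma fcoef_Ek: "fcoef (Ek N \<phi> k) n = DD N \<phi> k n"
  unfolding Ek_def[abs_def] DD_def
  by (subst fcoef_diff) (auto intro!: continuous_intros simp: fcoef_ee fcoef_Rk)

lemma Ek_per: "Ek N \<phi> k 0 = Ek N \<phi> k 1"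
proof -
  have "Psi N \<phi> (1 - a) = Psi N \<phi> (0 - a)" for a using Psi_per[of "-a"] by simp
  then show ?thesis unfolding Ek_def Rk_def by simp
qed


lemma nu_mu: "nu N \<phi> k = 1 - mu N \<phi> k"
proof -
  define W where "W = (\<lambda>b. k - b) ` BN N"
  have fW: "finite W" unfolding W_def by simp
  have s: "fcoef \<phi> summable_on UNIV" by (rule abs_summable_summable, rule sm)
  have "infsum (fcoef \<phi>) (W \<union> (UNIV - W)) = infsum (fcoef \<phi>) W + infsum (fcoef \<phi>) (UNIV - W)"
    by (rule infsum_Un_disjoint) (auto intro: summable_on_subset_banach[OF s])
  moreover have "W \<union> (UNIV - W) = UNIV" by auto
  moreover have "infsum (fcoef \<phi>) UNIV = 1" using inversion0[OF hc h01 sm] h0 by simp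
  ultimately show ?thesis unfolding nu_def mu_def W_def[symmetric] using fW by (simp add: eq_diff_eq add.commute)
qed


lemma errterm_has_sum: "((\<lambda>n. (cmod (DD N \<phi> k n))\<^sup>2) has_sum (errterm N \<phi> k)\<^sup>2) UNIV"
proof -
  define g where "g n = (cmod (DD N \<phi> k n))\<^sup>2" for n
  define h where "h l = k + 2 * l * int N" for l
  obtain W where hasW: "(g has_sum W) UNIV"
    using parseval[OF Ek_cont Ek_per, of k] unfolding g_def fcoef_Ek by blast
  have injh: "inj h" unfolding h_def inj_def using N by auto
  have h0: "h 0 = k" unfolding h_def by simp
  have gz: "g n = 0" if "n \<notin> range h" for n
  proof -
    have "\<not> (2 * int N) dvd (k - n)"
    proof
      assume "(2 * int N) dvd (k - n)"
      then obtain m where "k - n = 2 * int N * m" by blast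
      then have "n = h (-m)" unfolding h_def by (simp add: algebra_simps)
      then show False using that by auto
    qed
    moreover have "n \<noteq> k" using that h0 by (metis rangeI)
    ultimately show ?thesis unfolding g_def DD_def by simp
  qed
  have "(g has_sum W) UNIV \<longleftrightarrow> (g has_sum W) (range h)"
    by (rule has_sum_cong_neutral) (simp_all add: gz)
  then have "(g has_sum W) (range h)" using hasW by simp
  then have hgh: "((g \<circ> h) has_sum W) UNIV" using has_sum_reindex[OF injh] by blast
  have sm0: "(g \<circ> h) summable_on (UNIV - {0})"
    by (rule summable_on_subset_banach[of _ UNIV]) (use hgh has_sum_imp_summable in auto)
  have U: "insert 0 (UNIV - {0::int}) = UNIV" by auto
  have "W = infsum (g \<circ> h) UNIV" using hgh by (rule infsumI[symmetric])
  also have "\<dots> = infsum (g \<circ> h) (insert 0 (UNIV - {0}))" unfolding U ..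
  also have "\<dots> = (g \<circ> h) 0 + infsum (g \<circ> h) (UNIV - {0})" by (rule infsum_insert[OF sm0]) simp
  also have "(g \<circ> h) 0 = (cmod (nu N \<phi> k))\<^sup>2" unfolding g_def o_def h0 DD_def nu_mu by simp
  also have "infsum (g \<circ> h) (UNIV - {0}) = infsum (\<lambda>l. (cmod (mu N \<phi> (k + 2 * l * int N)))\<^sup>2) (UNIV - {0})"
  proof (rule infsum_cong)
    fix l :: int assume "l \<in> UNIV - {0}"
    then have "h l \<noteq> k" "(2 * int N) dvd (k - h l)" unfolding h_def using N by auto
    then show "(g \<circ> h) l = (cmod (mu N \<phi> (k + 2 * l * int N)))\<^sup>2" unfolding g_def DD_def o_def
      by (simp add: h_def)
  qed
  finally have "W = (errterm N \<phi> k)\<^sup>2"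
    unfolding errterm_def by (subst real_sqrt_pow2) (auto intro!: add_nonneg_nonneg infsum_nonneg)
  then show ?thesis using hasW unfolding g_def by simp
qed

end

lemma norm_vec_sq: "(norm (v :: complex ^ 'm))\<^sup>2 = (\<Sum>i\<in>UNIV. (cmod (v $ i))\<^sup>2)"
  unfolding norm_vec_def L2_set_def by (simp add: sum_nonneg)

lemma sumsq_disjoint:
  fixes a :: "'a \<Rightarrow> complex"
  assumes K: "finite K" and d: "\<And>k k'. k \<in> K \<Longrightarrow> k' \<in> K \<Longrightarrow> k \<noteq> k' \<Longrightarrow> a k = 0 \<or> a k' = 0"
  shows "(cmod (sum a K))\<^sup>2 = (\<Sum>k\<in>K. (cmod (a k))\<^sup>2)"
proof (cases "\<exists>k0\<in>K. a k0 \<noteq> 0")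
  case True
  then obtain k0 where k0: "k0 \<in> K" "a k0 \<noteq> 0" by blast
  have z: "a k = 0" if "k \<in> K - {k0}" for k using d[of k0 k] k0 that by auto
  have "sum a K = a k0" using sum.remove[OF K k0(1), of a] z by simp
  moreover have "(\<Sum>k\<in>K. (cmod (a k))\<^sup>2) = (cmod (a k0))\<^sup>2"
    using sum.remove[OF K k0(1), of "\<lambda>k. (cmod (a k))\<^sup>2"] z by simp
  ultimately show ?thesis by simp
next
  case False then show ?thesis by simp
qed

lemma has_sum_finsum:
  fixes f :: "'i \<Rightarrow> 'a \<Rightarrow> real"
  assumes "finite I" "\<And>i. i \<in> I \<Longrightarrow> (f i has_sum s i) A"
  shows "((\<lambda>x. \<Sum>i\<in>I. f i x) has_sum (\<Sum>i\<in>I. s i)) A"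
  using assms
proof (induction I rule: finite_induct)
  case empty then show ?case by simp
next
  case (insert i I) then show ?case by (simp add: has_sum_add)
qed

lemma BN_diff:
  assumes "k \<in> BN mm" "k' \<in> BN mm" "mm \<le> N" "(2 * int N) dvd (k - k')"
  shows "k = k'"
proof (rule ccontr)
  assume "k \<noteq> k'"
  then have "\<bar>2 * int N\<bar> \<le> \<bar>k - k'\<bar>" using assms(4) by (intro dvd_imp_le_int) auto
  moreover have "\<bar>k - k'\<bar> < 2 * int mm" using assms(1,2) unfolding BN_def by auto
  ultimately show False using assms(3) by linarith
qed

lemma DD_nz: "DD N \<phi> k n \<noteq> 0 \<Longrightarrow> (2 * int N) dvd (k - n)"
  unfolding DD_def by (cases "n = k"; cases "(2 * int N) dvd (k - n)") auto

theorem lemma4p2: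
  fixes \<phi> :: "real \<Rightarrow> complex" and f :: "real \<Rightarrow> complex ^ 'm"
    and mm N :: nat
  assumes "continuous_on {0..1} \<phi>" and "\<phi> 0 = 1" and "\<phi> 1 = 1"
    and "(\<lambda>l. norm (fcoef \<phi> l)) summable_on UNIV"
    and "mm \<ge> 1" and "N \<ge> mm"
    and "bandlimited mm f"
  shows "eps1 mm N \<phi> * L2norm f \<le> L2norm (\<lambda>x. f x - Rphi N \<phi> f x)
       \<and> L2norm (\<lambda>x. f x - Rphi N \<phi> f x) \<le> eps2 mm N \<phi> * L2norm f"
proof -
  note hc = assms(1) and h0 = assms(2) and h1 = assms(3) and sm = assms(4)
  have N: "N > 0" using assms(5,6) by simp
  have fc: "continuous_on UNIV f" and fp: "\<And>x. f (x + 1) = f x"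
    and fz: "\<And>k. k \<notin> BN mm \<Longrightarrow> vfcoef f k = 0"
    using assms(7) unfolding bandlimited_def by auto
  define B where "B = BN mm"
  have fB: "finite B" unfolding B_def by simp
  define c where "c k = vfcoef f k" for k
  have fcoef_c: "fcoef (\<lambda>x. f x $ i) k = c k $ i" for i k unfolding c_def vfcoef_def by simp
  have fic: "continuous_on S (\<lambda>x. f x $ i)" for i S
    by (rule continuous_on_component, rule continuous_on_subset[OF fc]) simp
  have rep: "f x $ i = (\<Sum>k\<in>B. c k $ i * ee k x)" if x: "x \<in> {0..1}" for x i
  proof -
    define g where "g x = f x $ i - (\<Sum>k\<in>B. c k $ i * ee k x)" for x
    have gc: "continuous_on {0..1} g" unfolding g_def by (intro continuous_intros fic)
    have g01: "g 0 = g 1" unfolding g_def using fp[of 0] by simp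
    have "fcoef g n = 0" for n
      unfolding g_def[abs_def]
      by (subst fcoef_diff) (auto intro!: continuous_intros fic simp: fcoef_trig fB fcoef_c c_def fz B_def)
    then have "g x = 0" using fcoef_unique[OF gc g01 _ x] by blast
    then show ?thesis unfolding g_def by simp
  qed
  define E where "E i x = (\<Sum>k\<in>B. c k $ i * Ek N \<phi> k x)" for i x
  have Erep: "(f x - Rphi N \<phi> f x) $ i = E i x" if x: "x \<in> {0..1}" for x i
  proof -
    have aa01: "aa N j \<in> {0..1}" if "j < 2 * N" for j
      using that N unfolding aa_def by (auto simp: field_simps)
    have "Rphi N \<phi> f x $ i = (\<Sum>j<2*N. Psi N \<phi> (x - aa N j) * f (aa N j) $ i)"
      unfolding Rphi_def Psi_def aa_def cscale_def by simp
    also have "\<dots> = (\<Sum>j<2*N. Psi N \<phi> (x - aa N j) * (\<Sum>k\<in>B. c k $ i * ee k (aa N j)))"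
    proof (rule sum.cong)
      fix j assume "j \<in> {..<2*N}"
      then show "Psi N \<phi> (x - aa N j) * f (aa N j) $ i = Psi N \<phi> (x - aa N j) * (\<Sum>k\<in>B. c k $ i * ee k (aa N j))"
        using rep[OF aa01[of j]] by simp
    qed simp
    also have "\<dots> = (\<Sum>k\<in>B. c k $ i * Rk N \<phi> k x)"
      unfolding Rk_def sum_distrib_left
      by (subst sum.swap) (rule sum.cong[OF refl], rule sum.cong[OF refl], simp add: mult_ac)
    finally have R: "Rphi N \<phi> f x $ i = (\<Sum>k\<in>B. c k $ i * Rk N \<phi> k x)" .
    have "(f x - Rphi N \<phi> f x) $ i = f x $ i - Rphi N \<phi> f x $ i" by simp
    also have "\<dots> = (\<Sum>k\<in>B. c k $ i * ee k x) - (\<Sum>k\<in>B. c k $ i * Rk N \<phi> k x)"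
      unfolding R rep[OF x] ..
    also have "\<dots> = E i x" unfolding E_def Ek_def by (simp only: right_diff_distrib sum_subtractf)
    finally show ?thesis .
  qed
  have Ec: "continuous_on {0..1} (E i)" for i
    unfolding E_def[abs_def] using N hc h0 h1 sm by (intro continuous_intros Ek_cont) auto
  have E01: "E i 0 = E i 1" for i
    unfolding E_def using Ek_per[OF N hc h0 h1 sm] by simp
  have fcE: "fcoef (E i) n = (\<Sum>k\<in>B. c k $ i * DD N \<phi> k n)" for i n
    unfolding E_def[abs_def]
    by (subst fcoef_sum) (auto intro!: continuous_intros Ek_cont[OF N hc h0 h1 sm] simp: fB fcoef_cmult fcoef_Ek[OF N hc h0 h1 sm])
  define T where "T k = (errterm N \<phi> k)\<^sup>2" for k
  have intE: "integral {0..1} (\<lambda>x. (cmod (E i x))\<^sup>2) = (\<Sum>k\<in>B. (cmod (c k $ i))\<^sup>2 * T k)" for i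
  proof -
    have DDz: "DD N \<phi> k n = 0 \<or> DD N \<phi> k' n = 0" if kk: "k \<in> B" "k' \<in> B" "k \<noteq> k'" for k k' n
    proof (rule ccontr)
      assume "\<not> ?thesis"
      then have a: "(2 * int N) dvd (k - n)" and b: "(2 * int N) dvd (k' - n)" using DD_nz by blast+
      have "k - k' = (k - n) - (k' - n)" by simp
      then have "(2 * int N) dvd (k - k')" using dvd_diff[OF a b] by simp
      then have "k = k'" using BN_diff[of k mm k' N] kk(1,2) assms(6) unfolding B_def by blast
      then show False using kk(3) by simp
    qed
    have eq: "(cmod (fcoef (E i) n))\<^sup>2 = (\<Sum>k\<in>B. (cmod (c k $ i))\<^sup>2 * (cmod (DD N \<phi> k n))\<^sup>2)" for n
    proof -
      have "(cmod (\<Sum>k\<in>B. c k $ i * DD N \<phi> k n))\<^sup>2 = (\<Sum>k\<in>B. (cmod (c k $ i * DD N \<phi> k n))\<^sup>2)"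
        by (rule sumsq_disjoint[OF fB]) (metis DDz mult_zero_right)
      then show ?thesis unfolding fcE by (simp add: norm_mult power_mult_distrib)
    qed
    have "((\<lambda>n. (cmod (fcoef (E i) n))\<^sup>2) has_sum (\<Sum>k\<in>B. (cmod (c k $ i))\<^sup>2 * T k)) UNIV"
      unfolding eq T_def
      by (intro has_sum_finsum fB has_sum_cmult_right errterm_has_sum[OF N hc h0 h1 sm])
    from has_sum_unique[OF parseval[OF Ec E01] this] show ?thesis .
  qed
  have intf: "integral {0..1} (\<lambda>x. (cmod (f x $ i))\<^sup>2) = (\<Sum>k\<in>B. (cmod (c k $ i))\<^sup>2)" for i
  proof -
    have "((\<lambda>k. (cmod (fcoef (\<lambda>x. f x $ i) k))\<^sup>2) has_sum integral {0..1} (\<lambda>x. (cmod (f x $ i))\<^sup>2)) UNIV"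
      by (rule parseval) (auto intro: fic simp: fp[of 0, symmetric])
    then have "((\<lambda>k. (cmod (fcoef (\<lambda>x. f x $ i) k))\<^sup>2) has_sum integral {0..1} (\<lambda>x. (cmod (f x $ i))\<^sup>2)) B"
    proof (subst (asm) has_sum_cong_neutral[where T=B])
      fix k assume "k \<in> UNIV - B"
      then have "vfcoef f k = 0" using fz B_def by simp
      then show "(cmod (fcoef (\<lambda>x. f x $ i) k))\<^sup>2 = 0" unfolding fcoef_c c_def by simp
    qed auto
    moreover have "((\<lambda>k. (cmod (fcoef (\<lambda>x. f x $ i) k))\<^sup>2) has_sum (\<Sum>k\<in>B. (cmod (c k $ i))\<^sup>2)) B"
      using has_sum_finite[OF fB] by (simp add: fcoef_c)
    ultimately show ?thesis using has_sum_unique by blast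
  qed
  define w where "w k = (\<Sum>i\<in>UNIV. (cmod (c k $ i))\<^sup>2)" for k
  have w0: "w k \<ge> 0" for k unfolding w_def by (simp add: sum_nonneg)
  have Lf: "L2norm f = sqrt (\<Sum>k\<in>B. w k)"
  proof -
    have "integral {0..1} (\<lambda>x. (norm (f x))\<^sup>2) = integral {0..1} (\<lambda>x. \<Sum>i\<in>UNIV. (cmod (f x $ i))\<^sup>2)"
      by (simp add: norm_vec_sq)
    also have "\<dots> = (\<Sum>i\<in>UNIV. \<Sum>k\<in>B. (cmod (c k $ i))\<^sup>2)"
      by (subst integral_sum) (auto intro!: int01 continuous_intros fic simp: intf)
    also have "\<dots> = (\<Sum>k\<in>B. w k)" unfolding w_def by (rule sum.swap)
    finally show ?thesis unfolding L2norm_def by simp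
  qed
  have LE: "L2norm (\<lambda>x. f x - Rphi N \<phi> f x) = sqrt (\<Sum>k\<in>B. w k * T k)"
  proof -
    have "integral {0..1} (\<lambda>x. (norm (f x - Rphi N \<phi> f x))\<^sup>2) = integral {0..1} (\<lambda>x. \<Sum>i\<in>UNIV. (cmod (E i x))\<^sup>2)"
    proof (rule integral_cong)
      fix x :: real assume x: "x \<in> {0..1}"
      show "(norm (f x - Rphi N \<phi> f x))\<^sup>2 = (\<Sum>i\<in>UNIV. (cmod (E i x))\<^sup>2)"
        unfolding norm_vec_sq Erep[OF x] ..
    qed
    also have "\<dots> = (\<Sum>i\<in>UNIV. \<Sum>k\<in>B. (cmod (c k $ i))\<^sup>2 * T k)"
      by (subst integral_sum) (auto intro!: int01 continuous_intros Ec simp: intE)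
    also have "\<dots> = (\<Sum>k\<in>B. w k * T k)" unfolding w_def sum_distrib_right by (rule sum.swap)
    finally show ?thesis unfolding L2norm_def by simp
  qed
  have er0: "errterm N \<phi> k \<ge> 0" for k
    unfolding errterm_def by (auto intro!: add_nonneg_nonneg infsum_nonneg)
  have Bne: "B \<noteq> {}" unfolding B_def BN_def using assms(5) by auto
  have e1: "eps1 mm N \<phi> \<le> errterm N \<phi> k" "0 \<le> eps1 mm N \<phi>" if "k \<in> B" for k
  proof -
    show "eps1 mm N \<phi> \<le> errterm N \<phi> k" unfolding eps1_def using that fB B_def by simp
    have "eps1 mm N \<phi> \<in> errterm N \<phi> ` B" unfolding eps1_def B_def
      by (rule Min_in) (use fB Bne B_def in auto)
    then show "0 \<le> eps1 mm N \<phi>" using er0 by auto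
  qed
  have e2: "errterm N \<phi> k \<le> eps2 mm N \<phi>" if "k \<in> B" for k
    unfolding eps2_def using that fB B_def by simp
  have eps1nn: "0 \<le> eps1 mm N \<phi>" using e1 Bne by blast
  have low: "(eps1 mm N \<phi>)\<^sup>2 * (\<Sum>k\<in>B. w k) \<le> (\<Sum>k\<in>B. w k * T k)"
    unfolding sum_distrib_left
  proof (rule sum_mono)
    fix k assume k: "k \<in> B"
    have "(eps1 mm N \<phi>)\<^sup>2 \<le> T k" unfolding T_def using e1[OF k] by (intro power_mono) auto
    then show "(eps1 mm N \<phi>)\<^sup>2 * w k \<le> w k * T k" using w0[of k] by (metis mult.commute mult_left_mono)
  qed
  have up: "(\<Sum>k\<in>B. w k * T k) \<le> (eps2 mm N \<phi>)\<^sup>2 * (\<Sum>k\<in>B. w k)"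
    unfolding sum_distrib_left
  proof (rule sum_mono)
    fix k assume k: "k \<in> B"
    have "T k \<le> (eps2 mm N \<phi>)\<^sup>2" unfolding T_def using e2[OF k] er0[of k] by (intro power_mono) auto
    then show "w k * T k \<le> (eps2 mm N \<phi>)\<^sup>2 * w k" using w0[of k] by (metis mult.commute mult_left_mono)
  qed
  have eps2nn: "0 \<le> eps2 mm N \<phi>" using e2 er0 Bne by (meson all_not_in_conv order_trans)
  have "eps1 mm N \<phi> * L2norm f = sqrt ((eps1 mm N \<phi>)\<^sup>2 * (\<Sum>k\<in>B. w k))"
    unfolding Lf real_sqrt_mult using eps1nn by simp
  also have "\<dots> \<le> L2norm (\<lambda>x. f x - Rphi N \<phi> f x)" unfolding LE using low by (rule real_sqrt_le_mono)
  finally have A: "eps1 mm N \<phi> * L2norm f \<le> L2norm (\<lambda>x. f x - Rphi N \<phi> f x)" .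
  have "L2norm (\<lambda>x. f x - Rphi N \<phi> f x) \<le> sqrt ((eps2 mm N \<phi>)\<^sup>2 * (\<Sum>k\<in>B. w k))"
    unfolding LE using up by (rule real_sqrt_le_mono)
  also have "\<dots> = eps2 mm N \<phi> * L2norm f"
    unfolding Lf real_sqrt_mult using eps2nn by simp
  finally show ?thesis using A by simp
qed

end
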